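(* Let $q>0$. If $L(q)$ contains a loop of odd length, then the weight $w_{q/n}$ is not unique for any integer $n\ge2$.
   Context: For $q>0$, $k\ge0$ and $\mathbf m=(m_0,\dots,m_k)\in\mathbb Z^{k+1}$ put $\mathbf m_j=(m_0,\dots,m_j)$; define $c(q,\mathbf m_0)=m_0$ and $c(q,\mathbf m_j)=m_j+\frac{1}{q\,c(q,\mathbf m_{j-1})}$ for $1\le j\le k$. $\mathbf m$ is a path for $q$ of length $k$ if $c(q,\mathbf m_j)\ne0$ for $0\le j\le k-1$. The weight of a path is $w_q(\mathbf m)=q^{k/2}\prod_{j=0}^{k-1}|c(q,\mathbf m_j)|$ (and $1$ if $k=0$). A loop is a path with $c(q,\mathbf m)=0$; $L(q)$ is the set of loops for $q$. The weight $w_q$ is unique if $w_q(\mathbf m)=w_q(\mathbf n)$ for all paths $\mathbf m,\mathbf n$ for $q$ with $c(q,\mathbf m)=c(q,\mathbf n)$. *)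

theory Defs
  imports Complex_Main
begin

text \<open>A tuple m = (m_0,...,m_k) is represented as an integer list of length k+1
  (so nonempty); its length as a path is k = length m - 1.
  cf q m j is c(q, m_j), the value for the prefix (m_0,...,m_j).\<close>

fun cf :: "real \<Rightarrow> int list \<Rightarrow> nat \<Rightarrow> real" where
  "cf q m 0 = of_int (m ! 0)"
| "cf q m (Suc j) = of_int (m ! Suc j) + 1 / (q * cf q m j)"

definition plen :: "int list \<Rightarrow> nat" where
  "plen m = length m - 1"

definition cval :: "real \<Rightarrow> int list \<Rightarrow> real" where
  "cval q m = cf q m (plen m)"

definition is_path :: "real \<Rightarrow> int list \<Rightarrow> bool" where
  "is_path q m \<longleftrightarrow> m \<noteq> [] \<and> (\<forall>j < plen m. cf q m j \<noteq> 0)"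

definition weight :: "real \<Rightarrow> int list \<Rightarrow> real" where
  "weight q m = sqrt q ^ plen m * (\<Prod>j<plen m. \<bar>cf q m j\<bar>)"

definition loops :: "real \<Rightarrow> int list set" where
  "loops q = {m. is_path q m \<and> cval q m = 0}"

definition weight_unique :: "real \<Rightarrow> bool" where
  "weight_unique q \<longleftrightarrow>
     (\<forall>m n. is_path q m \<longrightarrow> is_path q n \<longrightarrow> cval q m = cval q n \<longrightarrow> weight q m = weight q n)"

end

theory Submission
  imports Defs
begin

definition sc :: "bool \<Rightarrow> int \<Rightarrow> int list \<Rightarrow> int list" where
  "sc p n m = map (\<lambda>i. if even i = p then n * m ! i else m ! i) [0..<length m]"

lemma sc_len[simp]: "length (sc p n m) = length m"
  by (simp add: sc_def)

lemma sc_nth: "i < length m \<Longrightarrow> sc p n m ! i = (if even i = p then n * m ! i else m ! i)"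
  by (simp add: sc_def)

lemma cf_sc:
  assumes "q > 0" "n \<noteq> 0"
  shows "j < length m \<Longrightarrow> cf (q / of_int n) (sc p n m) j
          = (if even j = p then of_int n else 1) * cf q m j"
proof (induction j)
  case 0
  then show ?case by (simp add: sc_nth)
next
  case (Suc j)
  then have IH: "cf (q / of_int n) (sc p n m) j = (if even j = p then of_int n else 1) * cf q m j"
    by simp
  have nz: "real_of_int n \<noteq> 0" using assms by simp
  show ?case
    using Suc.prems nz assms
    by (simp add: IH sc_nth field_simps)
qed

lemma prod_alt: "(\<Prod>j<2*t. (if even j then (a::real) else b)) = (a*b)^t"
proof (induction t)
  case 0
  then show ?case by simp
next
  case (Suc t)
  have "2 * Suc t = Suc (Suc (2*t))" by simp
  then show ?case using Suc by (simp add: mult.commute)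
qed

lemma prod_altT: "(\<Prod>j<2*t+1. (if even j = True then (a::real) else 1)) = a^(t+1)"
  using prod_alt[of a 1 t] by simp

lemma prod_altF: "(\<Prod>j<2*t+1. (if even j = False then (a::real) else 1)) = a^t"
proof -
  have "(\<Prod>j<2*t. (if even j = False then (a::real) else 1)) = (\<Prod>j<2*t. (if even j then 1 else a))"
    by (intro prod.cong) auto
  also have "\<dots> = a^t" using prod_alt[of 1 a t] by simp
  finally show ?thesis by simp
qed

theorem corollary3:
  fixes q :: real
  assumes "q > 0"
    and "\<exists>m \<in> loops q. odd (plen m)"
  shows "\<forall>n::int. n \<ge> 2 \<longrightarrow> \<not> weight_unique (q / of_int n)"
proof (intro allI impI)
  fix n :: int assume n2: "n \<ge> 2"
  from assms(2) obtain m where ml: "m \<in> loops q" and odd: "odd (plen m)" by blast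
  have pm: "is_path q m" and cm: "cval q m = 0" using ml by (auto simp: loops_def)
  have mne: "m \<noteq> []" and cnz: "\<And>j. j < plen m \<Longrightarrow> cf q m j \<noteq> 0"
    using pm by (auto simp: is_path_def)
  obtain t where kt: "plen m = 2*t+1" using odd oddE by blast
  have nnz: "n \<noteq> 0" using n2 by simp
  have lenk: "plen m < length m" using mne by (simp add: plen_def)
  define Q where "Q = q / of_int n"
  have plsc: "\<And>p. plen (sc p n m) = plen m" by (simp add: plen_def)
  have cfsc: "\<And>p j. j < length m \<Longrightarrow> cf Q (sc p n m) j = (if even j = p then of_int n else 1) * cf q m j"
    unfolding Q_def using cf_sc[OF assms(1) nnz] by blast
  have path: "\<And>p. is_path Q (sc p n m)"
    unfolding is_path_def using mne cnz nnz lenk by (auto simp: plsc cfsc simp flip: length_0_conv)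
  have cv: "\<And>p. cval Q (sc p n m) = 0"
    unfolding cval_def using cm lenk by (simp add: plsc cfsc cval_def)
  define P where "P = (\<Prod>j<plen m. \<bar>cf q m j\<bar>)"
  have Ppos: "P > 0" unfolding P_def using cnz by (intro prod_pos) auto
  have wt: "\<And>p. weight Q (sc p n m) = sqrt Q ^ plen m * (\<Prod>j<plen m. (if even j = p then real_of_int n else 1)) * P"
  proof -
    fix p
    have "(\<Prod>j<plen m. \<bar>cf Q (sc p n m) j\<bar>) = (\<Prod>j<plen m. (if even j = p then real_of_int n else 1) * \<bar>cf q m j\<bar>)"
      using lenk n2 by (intro prod.cong) (auto simp: cfsc abs_mult)
    also have "\<dots> = (\<Prod>j<plen m. (if even j = p then real_of_int n else 1)) * P"
      unfolding P_def by (rule prod.distrib)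
    finally show "?thesis p" unfolding weight_def plsc by simp
  qed
  have Qpos: "Q > 0" unfolding Q_def using assms(1) n2 by simp
  have A: "sqrt Q ^ plen m > 0" using Qpos by simp
  have w1: "weight Q (sc True n m) = sqrt Q ^ plen m * real_of_int n ^ (t+1) * P"
    using wt[of True] prod_altT[of "real_of_int n" t] kt by simp
  have w2: "weight Q (sc False n m) = sqrt Q ^ plen m * real_of_int n ^ t * P"
    using wt[of False] prod_altF[of "real_of_int n" t] kt by simp
  have ne: "weight Q (sc True n m) \<noteq> weight Q (sc False n m)"
  proof
    assume "weight Q (sc True n m) = weight Q (sc False n m)"
    then have "sqrt Q ^ plen m * P * (real_of_int n ^ t * real_of_int n) = sqrt Q ^ plen m * P * (real_of_int n ^ t * 1)"
      unfolding w1 w2 by (simp add: algebra_simps)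
    moreover have "sqrt Q ^ plen m * P * real_of_int n ^ t \<noteq> 0" using A Ppos n2 by (metis less_irrefl mult_eq_0_iff of_int_0_eq_iff power_eq_0_iff nnz)
    ultimately have "real_of_int n = 1" by (metis mult.assoc mult_cancel_left)
    then show False using n2 by simp
  qed
  show "\<not> weight_unique Q" unfolding weight_unique_def using path cv ne by metis
qed

end
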